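(* Let $k$ be a positive integer or $k=\infty$, let $m\ge1$, and let $\lambda=(\lambda_1,\dots,\lambda_m)$, $\mu=(\mu_1,\dots,\mu_m)$ be integer sequences with $\mu_i\le\lambda_i$ for all $i$, where $\mu$ is decreasing and all $\mu_i$ are even. Suppose either (a) $\lambda$ is increasing and all $\lambda_i$ are odd, or (b) $\lambda$ is decreasing and all $\lambda_i$ are even. Then the generating function $\sum_{\mathcal T}w_{AV}(\mathcal T)$ over all alternating tableaux $\mathcal T$ of shape $\lambda/\mu$ with all entries in $\{1,\dots,k\}$ (all positive integers if $k=\infty$) equals $$\det\Big(\mathrm{GF}\big(\mathcal A_{\lambda_j-\mu_i}^{(k)};w_{AV}\big)\Big)_{1\le i,j\le m}.$$
   Context: An alternating tableau of shape $\lambda/\mu$ (with $\mu_i$ even, $\mu_i\le\lambda_i$) is an array of integers $(a_{i,j})$, $1\le i\le m$, $\mu_i<j\le\lambda_i$ (row $i$ occupies columns $\mu_i+1,\dots,\lambda_i$), such that $a_{i,2j-1}\le a_{i,2j}$ and $a_{i,2j}\ge a_{i,2j+1}$, and $a_{i+1,2j}<a_{i,2j+1}>a_{i+1,2j+2}$, for all $i,j$ whenever the entries involved are defined. With indeterminates $A_1,A_2,\dots,V_1,V_2,\dots$, the weight is $w_{AV}(\mathcal T)=\prod_{i,j}A_{a_{i,2j}}V_{a_{i,2j-1}}$ (entries in even columns give $A$'s, in odd columns $V$'s). $\mathcal A_n^{(k)}$ is the set of integer sequences $(a_1,\dots,a_n)$ with entries in $\{1,\dots,k\}$ and $a_1\le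 a_2\ge a_3\le a_4\ge\cdots$; its weight is $w_{AV}=\prod_i A_{a_{2i}}\prod_i V_{a_{2i-1}}$; $\mathcal A_0^{(k)}$ consists of the empty sequence (weight $1$) and $\mathcal A_n^{(k)}=\emptyset$ for $n<0$. $\mathrm{GF}(\mathcal O;w)=\sum_{t\in\mathcal O}w(t)$; for $k=\infty$ these are formal power series. *)

theory Defs
  imports "HOL-Library.Multiset" "HOL-Library.Extended_Nat" "HOL-Combinatorics.Permutations"
begin

text \<open>Formal power series in the commuting indeterminates A_1, A_2, ... and V_1, V_2, ...
  with integer coefficients.  A monomial prod_a A_a^(e_a) prod_v V_v^(f_v) is encoded by the
  pair of multisets (A-indices, V-indices); a series is its coefficient function.\<close>

type_synonym monom = "int multiset \<times> int multiset"
type_synonym gfs = "monom \<Rightarrow> int"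

definition gf_one :: gfs where
  "gf_one M = (if M = ({#}, {#}) then 1 else 0)"

text \<open>Product of formal power series (Cauchy product; the set of splittings is finite).\<close>
definition gf_mult :: "gfs \<Rightarrow> gfs \<Rightarrow> gfs" where
  "gf_mult f g M = (\<Sum>(M1, M2) \<in> {(M1, M2). fst M1 + fst M2 = fst M \<and> snd M1 + snd M2 = snd M}. f M1 * g M2)"

definition gf_prod_list :: "gfs list \<Rightarrow> gfs" where
  "gf_prod_list fs = foldr gf_mult fs gf_one"

definition gf_det :: "nat \<Rightarrow> (nat \<Rightarrow> nat \<Rightarrow> gfs) \<Rightarrow> gfs" where
  "gf_det m F M = (\<Sum>\<sigma> \<in> {\<sigma>. \<sigma> permutes {1..m}}.
      sign \<sigma> * gf_prod_list (map (\<lambda>i. F i (\<sigma> i)) [1..<m+1]) M)"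

definition in_range :: "enat \<Rightarrow> int \<Rightarrow> bool" where
  "in_range k x \<longleftrightarrow> 1 \<le> x \<and> (case k of enat n \<Rightarrow> x \<le> int n | \<infinity> \<Rightarrow> True)"

text \<open>Alternating sequences A_n^(k): lists (a_1,...,a_n) (stored 0-indexed) with
  a_1 \<le> a_2 \<ge> a_3 \<le> a_4 \<ge> ...; empty for n < 0.\<close>
definition alt_seqs :: "enat \<Rightarrow> int \<Rightarrow> int list set" where
  "alt_seqs k n = {s. int (length s) = n \<and> (\<forall>x \<in> set s. in_range k x) \<and>
      (\<forall>p. Suc p < length s \<longrightarrow>
         (if even p then s ! p \<le> s ! Suc p else s ! p \<ge> s ! Suc p))}"

text \<open>Weight w_AV: entries at even (1-indexed) positions give A's, at odd positions V's.\<close>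
definition seq_weight :: "int list \<Rightarrow> monom" where
  "seq_weight s = (mset (map (\<lambda>p. s ! p) (filter odd [0..<length s])),
                   mset (map (\<lambda>p. s ! p) (filter even [0..<length s])))"

definition gf_alt :: "enat \<Rightarrow> int \<Rightarrow> gfs" where
  "gf_alt k n M = int (card {s \<in> alt_seqs k n. seq_weight s = M})"

definition cells :: "nat \<Rightarrow> (nat \<Rightarrow> int) \<Rightarrow> (nat \<Rightarrow> int) \<Rightarrow> (nat \<times> int) set" where
  "cells m lam mu = {(i, c). 1 \<le> i \<and> i \<le> m \<and> mu i < c \<and> c \<le> lam i}"

text \<open>Alternating tableaux of shape lambda/mu with entries in {1..k}; a tableau is a
  function (row, column) \<mapsto> entry, which is 0 outside the shape.\<close>
definition alt_tableaux :: "enat \<Rightarrow> nat \<Rightarrow> (nat \<Rightarrow> int) \<Rightarrow> (nat \<Rightarrow> int) \<Rightarrow> (nat \<Rightarrow> int \<Rightarrow> int) set" where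
  "alt_tableaux k m lam mu = {a.
     (\<forall>i c. (i, c) \<notin> cells m lam mu \<longrightarrow> a i c = 0) \<and>
     (\<forall>(i, c) \<in> cells m lam mu. in_range k (a i c)) \<and>
     (\<forall>i c. (i, c) \<in> cells m lam mu \<and> (i, c + 1) \<in> cells m lam mu \<longrightarrow>
        (if odd c then a i c \<le> a i (c + 1) else a i c \<ge> a i (c + 1))) \<and>
     (\<forall>i c. odd c \<and> (i, c) \<in> cells m lam mu \<and> (i + 1, c - 1) \<in> cells m lam mu \<longrightarrow>
        a (i + 1) (c - 1) < a i c) \<and>
     (\<forall>i c. odd c \<and> (i, c) \<in> cells m lam mu \<and> (i + 1, c + 1) \<in> cells m lam mu \<longrightarrow>
        a (i + 1) (c + 1) < a i c)}"

definition tab_weight :: "nat \<Rightarrow> (nat \<Rightarrow> int) \<Rightarrow> (nat \<Rightarrow> int) \<Rightarrow> (nat \<Rightarrow> int \<Rightarrow> int) \<Rightarrow> monom" where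
  "tab_weight m lam mu a =
     ((\<Sum>(i, c) \<in> {(i, c) \<in> cells m lam mu. even c}. {# a i c #}),
      (\<Sum>(i, c) \<in> {(i, c) \<in> cells m lam mu. odd c}. {# a i c #}))"

definition gf_tab :: "enat \<Rightarrow> nat \<Rightarrow> (nat \<Rightarrow> int) \<Rightarrow> (nat \<Rightarrow> int) \<Rightarrow> gfs" where
  "gf_tab k m lam mu M = int (card {a \<in> alt_tableaux k m lam mu. tab_weight m lam mu a = M})"

end

theory Submission
  imports Defs
begin


definition splits :: "monom \<Rightarrow> (monom \<times> monom) set" where
  "splits M = {(M1, M2). fst M1 + fst M2 = fst M \<and> snd M1 + snd M2 = snd M}"

lemma finite_msub: "finite {A::'a multiset. \<exists>B. A + B = N}"
proof -
  have "{A::'a multiset. \<exists>B. A + B = N} \<subseteq> (\<Union>n\<in>{0..size N}. multisets_of_size (set_mset N) n)"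
  proof
    fix A assume "A \<in> {A::'a multiset. \<exists>B. A + B = N}"
    then obtain B where "A + B = N" by auto
    then have "set_mset A \<subseteq> set_mset N" "size A \<le> size N" by auto
    then show "A \<in> (\<Union>n\<in>{0..size N}. multisets_of_size (set_mset N) n)"
      by (auto simp: multisets_of_size_def)
  qed
  moreover have "finite (\<Union>n\<in>{0..size N}. multisets_of_size (set_mset N) n)" by auto
  ultimately show ?thesis by (rule finite_subset)
qed

lemma finite_splits: "finite (splits M)"
proof -
  let ?F = "{A. \<exists>B. A + B = fst M}" and ?G = "{A. \<exists>B. A + B = snd M}"
  have "splits M \<subseteq> (?F \<times> ?G) \<times> (?F \<times> ?G)"
    unfolding splits_def by (auto simp: add.commute) (metis add.commute)+
  moreover have "finite ((?F \<times> ?G) \<times> (?F \<times> ?G))" using finite_msub by blast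
  ultimately show ?thesis by (rule finite_subset)
qed

lemma gf_mult_card:
  fixes A :: "'a set" and B :: "'b set" and wa :: "'a \<Rightarrow> monom" and wb :: "'b \<Rightarrow> monom"
  assumes fA: "\<And>N. finite {x\<in>A. wa x = N}" and fB: "\<And>N. finite {y\<in>B. wb y = N}"
  shows "gf_mult (\<lambda>N. int (card {x\<in>A. wa x = N})) (\<lambda>N. int (card {y\<in>B. wb y = N})) M
       = int (card {(x,y). x\<in>A \<and> y\<in>B \<and> fst (wa x) + fst (wb y) = fst M \<and> snd (wa x) + snd (wb y) = snd M})"
    and "finite {(x,y). x\<in>A \<and> y\<in>B \<and> fst (wa x) + fst (wb y) = fst M \<and> snd (wa x) + snd (wb y) = snd M}"
proof -
  let ?P = "{(x,y). x\<in>A \<and> y\<in>B \<and> fst (wa x) + fst (wb y) = fst M \<and> snd (wa x) + snd (wb y) = snd M}"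
  let ?Q = "\<lambda>p. {x\<in>A. wa x = fst p} \<times> {y\<in>B. wb y = snd p}"
  have eq: "?P = (\<Union>p\<in>splits M. ?Q p)"
  proof (rule set_eqI, rule iffI)
    fix z assume "z \<in> ?P"
    then show "z \<in> (\<Union>p\<in>splits M. ?Q p)" unfolding splits_def
      by (intro UN_I[of "(wa (fst z), wb (snd z))"]) auto
  qed (auto simp: splits_def)
  have fin: "\<forall>p\<in>splits M. finite (?Q p)" using fA fB by auto
  have disj: "\<forall>p\<in>splits M. \<forall>q\<in>splits M. p \<noteq> q \<longrightarrow> ?Q p \<inter> ?Q q = {}"
    by auto
  show "finite ?P" unfolding eq using finite_splits fin by blast
  have "card ?P = (\<Sum>p\<in>splits M. card (?Q p))"
    unfolding eq by (rule card_UN_disjoint[OF finite_splits fin disj])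
  then have "int (card ?P) = (\<Sum>p\<in>splits M. int (card {x\<in>A. wa x = fst p}) * int (card {y\<in>B. wb y = snd p}))"
    by (simp add: card_cartesian_product)
  then show "gf_mult (\<lambda>N. int (card {x\<in>A. wa x = N})) (\<lambda>N. int (card {y\<in>B. wb y = N})) M = int (card ?P)"
    unfolding gf_mult_def splits_def by (simp add: case_prod_beta)
qed




definition cellsR :: "nat set \<Rightarrow> (nat \<Rightarrow> int) \<Rightarrow> (nat \<Rightarrow> int) \<Rightarrow> (nat \<times> int) set" where
  "cellsR R e mu = {(i, c). i \<in> R \<and> mu i < c \<and> c \<le> e i}"

definition confR :: "enat \<Rightarrow> nat set \<Rightarrow> (nat \<Rightarrow> int) \<Rightarrow> (nat \<Rightarrow> int) \<Rightarrow> (nat \<Rightarrow> int \<Rightarrow> int) set" where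
  "confR k R e mu = {a. (\<forall>i c. (i, c) \<notin> cellsR R e mu \<longrightarrow> a i c = 0) \<and> (\<forall>i\<in>R. mu i \<le> e i) \<and>
     (\<forall>(i, c) \<in> cellsR R e mu. in_range k (a i c)) \<and>
     (\<forall>i c. (i, c) \<in> cellsR R e mu \<and> (i, c + 1) \<in> cellsR R e mu \<longrightarrow>
        (if odd c then a i c \<le> a i (c + 1) else a i c \<ge> a i (c + 1)))}"

definition wpart :: "(int \<Rightarrow> bool) \<Rightarrow> nat set \<Rightarrow> (nat \<Rightarrow> int) \<Rightarrow> (nat \<Rightarrow> int) \<Rightarrow> (nat \<Rightarrow> int \<Rightarrow> int) \<Rightarrow> int multiset" where
  "wpart P R e mu a = (\<Sum>(i, c) \<in> {(i, c) \<in> cellsR R e mu. P c}. {# a i c #})"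

definition wR where "wR R e mu a = (wpart even R e mu a, wpart odd R e mu a)"

lemma mset_map_filter_split: "mset (map f (filter P xs)) + mset (map f (filter (\<lambda>x. \<not> P x) xs)) = mset (map f xs)"
  by (induction xs) auto

lemma seq_weight_mset: "fst (seq_weight s) + snd (seq_weight s) = mset s"
proof -
  have "mset s = mset (map (\<lambda>p. s ! p) [0..<length s])" by (simp add: map_nth)
  then show ?thesis unfolding seq_weight_def
    using mset_map_filter_split[of "\<lambda>p. s ! p" odd "[0..<length s]"] by simp
qed

lemma finite_alt_fiber: "finite {s \<in> alt_seqs k n. seq_weight s = N}"
proof -
  have "{s \<in> alt_seqs k n. seq_weight s = N} \<subseteq> {xs. set xs \<subseteq> set_mset (fst N + snd N) \<and> length xs = size (fst N + snd N)}"
  proof (rule subsetI)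
    fix s assume "s \<in> {s \<in> alt_seqs k n. seq_weight s = N}"
    then have m: "mset s = fst N + snd N" using seq_weight_mset[of s] by simp
    have "set s = set_mset (fst N + snd N)" using m by (metis set_mset_mset)
    moreover have "length s = size (fst N + snd N)" using m by (metis size_mset)
    ultimately show "s \<in> {xs. set xs \<subseteq> set_mset (fst N + snd N) \<and> length xs = size (fst N + snd N)}" by simp
  qed
  moreover have "finite {xs. set xs \<subseteq> set_mset (fst N + snd N) \<and> length xs = size (fst N + snd N)}"
    by (rule finite_lists_length_eq) simp
  ultimately show ?thesis by (rule finite_subset)
qed

lemma mset_map_distinct: "distinct L \<Longrightarrow> mset (map f L) = (\<Sum>x\<in>set L. {# f x #})"
  by (induction L) auto

lemma wpart_insert:
  assumes "lo \<notin> R" "finite R"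
  shows "wpart P (insert lo R) e mu a = (\<Sum>c\<in>{c. mu lo < c \<and> c \<le> e lo \<and> P c}. {# a lo c #}) + wpart P R e mu a"
proof -
  have fin: "finite {(i, c) \<in> cellsR R e mu. P c}"
  proof -
    have "{(i, c) \<in> cellsR R e mu. P c} \<subseteq> (\<Union>i\<in>R. {i} \<times> {mu i <.. e i})"
      unfolding cellsR_def by auto
    moreover have "finite (\<Union>i\<in>R. {i} \<times> {mu i <.. e i})" using assms by auto
    ultimately show ?thesis by (rule finite_subset)
  qed
  have split: "{(i, c) \<in> cellsR (insert lo R) e mu. P c} = (\<lambda>c. (lo, c)) ` {c. mu lo < c \<and> c \<le> e lo \<and> P c} \<union> {(i, c) \<in> cellsR R e mu. P c}"
    unfolding cellsR_def by auto
  have fin1: "finite {c. mu lo < c \<and> c \<le> e lo \<and> P c}"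
    by (rule finite_subset[of _ "{mu lo <.. e lo}"]) auto
  have "wpart P (insert lo R) e mu a = (\<Sum>(i, c) \<in> (\<lambda>c. (lo, c)) ` {c. mu lo < c \<and> c \<le> e lo \<and> P c}. {# a i c #}) + wpart P R e mu a"
    unfolding wpart_def split
    by (rule sum.union_disjoint) (use fin1 fin assms in \<open>auto simp: cellsR_def\<close>)
  also have "(\<Sum>(i, c) \<in> (\<lambda>c. (lo, c)) ` {c. mu lo < c \<and> c \<le> e lo \<and> P c}. {# a i c #}) = (\<Sum>c\<in>{c. mu lo < c \<and> c \<le> e lo \<and> P c}. {# a lo c #})"
    by (subst sum.reindex) (auto simp: inj_on_def)
  finally show ?thesis .
qed

lemma row_sum:
  fixes s :: "int list"
  assumes len: "length s = nat (e lo - mu lo)" and le: "mu lo \<le> e lo"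
    and val: "\<forall>c. mu lo < c \<and> c \<le> e lo \<longrightarrow> a lo c = s ! nat (c - mu lo - 1)"
    and PQ: "\<forall>p::nat. P (mu lo + 1 + int p) = Q p"
  shows "(\<Sum>c\<in>{c. mu lo < c \<and> c \<le> e lo \<and> P c}. {# a lo c #}) = mset (map (\<lambda>p. s ! p) (filter Q [0..<length s]))"
proof -
  have img: "{c. mu lo < c \<and> c \<le> e lo \<and> P c} = (\<lambda>p. mu lo + 1 + int p) ` {p. p < length s \<and> Q p}"
  proof (rule set_eqI, rule iffI)
    fix c assume c: "c \<in> {c. mu lo < c \<and> c \<le> e lo \<and> P c}"
    then have "c = mu lo + 1 + int (nat (c - mu lo - 1))" by auto
    moreover have "nat (c - mu lo - 1) < length s" using c len by auto
    moreover have "Q (nat (c - mu lo - 1))" using c PQ[rule_format, of "nat (c - mu lo - 1)"] by auto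
    ultimately show "c \<in> (\<lambda>p. mu lo + 1 + int p) ` {p. p < length s \<and> Q p}" by blast
  next
    fix c assume "c \<in> (\<lambda>p. mu lo + 1 + int p) ` {p. p < length s \<and> Q p}"
    then obtain p where "c = mu lo + 1 + int p" "p < length s" "Q p" by auto
    then show "c \<in> {c. mu lo < c \<and> c \<le> e lo \<and> P c}" using len le PQ by auto
  qed
  have "(\<Sum>c\<in>{c. mu lo < c \<and> c \<le> e lo \<and> P c}. {# a lo c #}) = (\<Sum>p\<in>{p. p < length s \<and> Q p}. {# a lo (mu lo + 1 + int p) #})"
    unfolding img by (subst sum.reindex) (auto simp: inj_on_def)
  also have "\<dots> = (\<Sum>p\<in>{p. p < length s \<and> Q p}. {# s ! p #})"
    by (rule sum.cong) (use val len in auto)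
  also have "{p. p < length s \<and> Q p} = set (filter Q [0..<length s])" by auto
  also have "(\<Sum>p\<in>set (filter Q [0..<length s]). {# s ! p #}) = mset (map (\<lambda>p. s ! p) (filter Q [0..<length s]))"
    by (rule mset_map_distinct[symmetric]) simp
  finally show ?thesis .
qed




lemma wpart_cong: "(\<And>i c. i \<in> R \<Longrightarrow> mu i < c \<Longrightarrow> c \<le> e i \<Longrightarrow> a i c = b i c) \<Longrightarrow> wpart P R e mu a = wpart P R e mu b"
  unfolding wpart_def cellsR_def by (rule sum.cong) auto

lemma wR_insert:
  assumes "lo \<notin> R" "finite R" "mu lo \<le> e lo" "even (mu lo)"
    and "length s = nat (e lo - mu lo)"
    and "\<forall>c. mu lo < c \<and> c \<le> e lo \<longrightarrow> a lo c = s ! nat (c - mu lo - 1)"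
  shows "wR (insert lo R) e mu a = (fst (seq_weight s) + fst (wR R e mu a), snd (seq_weight s) + snd (wR R e mu a))"
proof -
  have 1: "\<forall>p::nat. even (mu lo + 1 + int p) = odd p" using assms(4) by auto
  have 2: "\<forall>p::nat. odd (mu lo + 1 + int p) = even p" using assms(4) by auto
  show ?thesis unfolding wR_def seq_weight_def
    using wpart_insert[OF assms(1,2), of even e mu a] wpart_insert[OF assms(1,2), of odd e mu a]
      row_sum[where e=e and lo=lo and mu=mu and a=a and s=s, OF assms(5,3,6) 1]
      row_sum[where e=e and lo=lo and mu=mu and a=a and s=s, OF assms(5,3,6) 2] by simp
qed

definition rowF :: "nat \<Rightarrow> (nat \<Rightarrow> int) \<Rightarrow> (nat \<Rightarrow> int) \<Rightarrow> int list \<times> (nat \<Rightarrow> int \<Rightarrow> int) \<Rightarrow> (nat \<Rightarrow> int \<Rightarrow> int)" where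
  "rowF lo e mu p = (\<lambda>i c. if i = lo then (if mu lo < c \<and> c \<le> e lo then fst p ! nat (c - mu lo - 1) else 0) else snd p i c)"

definition rowG :: "nat \<Rightarrow> (nat \<Rightarrow> int) \<Rightarrow> (nat \<Rightarrow> int) \<Rightarrow> (nat \<Rightarrow> int \<Rightarrow> int) \<Rightarrow> int list \<times> (nat \<Rightarrow> int \<Rightarrow> int)" where
  "rowG lo e mu a = (map (\<lambda>p. a lo (mu lo + 1 + int p)) [0..<nat (e lo - mu lo)], \<lambda>i c. if i = lo then 0 else a i c)"

lemma rowF_conf:
  assumes "lo \<notin> R" "even (mu lo)" "s \<in> alt_seqs k (e lo - mu lo)" "b \<in> confR k R e mu"
  shows "rowF lo e mu (s, b) \<in> confR k (insert lo R) e mu"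
proof -
  have len: "int (length s) = e lo - mu lo" and rng: "\<forall>x\<in>set s. in_range k x"
    and alt: "\<forall>p. Suc p < length s \<longrightarrow> (if even p then s ! p \<le> s ! Suc p else s ! p \<ge> s ! Suc p)"
    using assms(3) unfolding alt_seqs_def by auto
  have b0: "\<forall>i c. (i, c) \<notin> cellsR R e mu \<longrightarrow> b i c = 0" and bR: "\<forall>i\<in>R. mu i \<le> e i"
    and brng: "\<forall>(i, c) \<in> cellsR R e mu. in_range k (b i c)"
    and balt: "\<forall>i c. (i, c) \<in> cellsR R e mu \<and> (i, c + 1) \<in> cellsR R e mu \<longrightarrow>
        (if odd c then b i c \<le> b i (c + 1) else b i c \<ge> b i (c + 1))"
    using assms(4) unfolding confR_def by auto
  let ?a = "rowF lo e mu (s, b)"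
  have A: "\<forall>i c. (i, c) \<notin> cellsR (insert lo R) e mu \<longrightarrow> ?a i c = 0"
    using b0 unfolding rowF_def cellsR_def by auto
  have B: "\<forall>i\<in>insert lo R. mu i \<le> e i" using bR len by auto
  have C: "\<forall>(i, c) \<in> cellsR (insert lo R) e mu. in_range k (?a i c)"
  proof (clarify)
    fix i c assume "(i, c) \<in> cellsR (insert lo R) e mu"
    then show "in_range k (?a i c)"
    proof (cases "i = lo")
      case True
      with \<open>(i, c) \<in> _\<close> have "mu lo < c" "c \<le> e lo" unfolding cellsR_def by auto
      then have "nat (c - mu lo - 1) < length s" using len by auto
      then show ?thesis using rng True \<open>mu lo < c\<close> \<open>c \<le> e lo\<close> unfolding rowF_def by auto
    next
      case False
      with \<open>(i, c) \<in> _\<close> have "(i, c) \<in> cellsR R e mu" unfolding cellsR_def by auto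
      then show ?thesis using brng False unfolding rowF_def by auto
    qed
  qed
  have D: "\<forall>i c. (i, c) \<in> cellsR (insert lo R) e mu \<and> (i, c + 1) \<in> cellsR (insert lo R) e mu \<longrightarrow>
        (if odd c then ?a i c \<le> ?a i (c + 1) else ?a i c \<ge> ?a i (c + 1))"
  proof (intro allI impI)
    fix i c assume h: "(i, c) \<in> cellsR (insert lo R) e mu \<and> (i, c + 1) \<in> cellsR (insert lo R) e mu"
    show "if odd c then ?a i c \<le> ?a i (c + 1) else ?a i c \<ge> ?a i (c + 1)"
    proof (cases "i = lo")
      case True
      with h have c: "mu lo < c" "c + 1 \<le> e lo" unfolding cellsR_def by auto
      define p where "p = nat (c - mu lo - 1)"
      have p1: "nat (c + 1 - mu lo - 1) = Suc p" using c p_def by auto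
      have "Suc p < length s" using c len p_def by auto
      moreover have "odd c \<longleftrightarrow> even p" using c assms(2) p_def
        by (smt (verit, best) even_add even_nat_iff even_numeral odd_one)
      ultimately show ?thesis using alt True c p1 unfolding rowF_def p_def[symmetric]
        by (auto split: if_splits)
    next
      case False
      with h have "(i, c) \<in> cellsR R e mu \<and> (i, c + 1) \<in> cellsR R e mu" unfolding cellsR_def by auto
      then show ?thesis using balt False unfolding rowF_def by auto
    qed
  qed
  show ?thesis unfolding confR_def using A B C D by blast
qed

lemma rowG_conf:
  assumes "lo \<notin> R" "a \<in> confR k (insert lo R) e mu" "even (mu lo)"
  shows "fst (rowG lo e mu a) \<in> alt_seqs k (e lo - mu lo)" "snd (rowG lo e mu a) \<in> confR k R e mu"
proof -
  have a0: "\<forall>i c. (i, c) \<notin> cellsR (insert lo R) e mu \<longrightarrow> a i c = 0" and aR: "\<forall>i\<in>insert lo R. mu i \<le> e i"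
    and arng: "\<forall>(i, c) \<in> cellsR (insert lo R) e mu. in_range k (a i c)"
    and aalt: "\<forall>i c. (i, c) \<in> cellsR (insert lo R) e mu \<and> (i, c + 1) \<in> cellsR (insert lo R) e mu \<longrightarrow>
        (if odd c then a i c \<le> a i (c + 1) else a i c \<ge> a i (c + 1))"
    using assms(2) unfolding confR_def by auto
  let ?s = "fst (rowG lo e mu a)"
  have ls: "length ?s = nat (e lo - mu lo)" unfolding rowG_def by simp
  have s_nth: "?s ! p = a lo (mu lo + 1 + int p)" if "p < nat (e lo - mu lo)" for p
    using that unfolding rowG_def by simp
  have "int (length ?s) = e lo - mu lo" using ls aR by auto
  moreover have "\<forall>x\<in>set ?s. in_range k x"
  proof
    fix x assume "x \<in> set ?s"
    then obtain p where "p < nat (e lo - mu lo)" "x = a lo (mu lo + 1 + int p)" unfolding rowG_def by auto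
    then show "in_range k x" using arng unfolding cellsR_def by auto
  qed
  moreover have "\<forall>p. Suc p < length ?s \<longrightarrow> (if even p then ?s ! p \<le> ?s ! Suc p else ?s ! p \<ge> ?s ! Suc p)"
  proof (intro allI impI)
    fix p assume "Suc p < length ?s"
    then have "Suc p < nat (e lo - mu lo)" using ls by simp
    then have "(lo, mu lo + 1 + int p) \<in> cellsR (insert lo R) e mu" "(lo, mu lo + 1 + int p + 1) \<in> cellsR (insert lo R) e mu"
      unfolding cellsR_def by auto
    then have "if odd (mu lo + 1 + int p) then a lo (mu lo + 1 + int p) \<le> a lo (mu lo + 1 + int p + 1) else a lo (mu lo + 1 + int p) \<ge> a lo (mu lo + 1 + int p + 1)"
      using aalt by blast
    moreover have "odd (mu lo + 1 + int p) \<longleftrightarrow> even p" using assms(3) by simp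
    ultimately show "if even p then ?s ! p \<le> ?s ! Suc p else ?s ! p \<ge> ?s ! Suc p"
      using s_nth[of p] s_nth[of "Suc p"] \<open>Suc p < nat (e lo - mu lo)\<close> by (auto simp: add.assoc)
  qed
  ultimately show "?s \<in> alt_seqs k (e lo - mu lo)" unfolding alt_seqs_def by blast
  show "snd (rowG lo e mu a) \<in> confR k R e mu"
    using a0 aR arng aalt assms(1) unfolding confR_def rowG_def cellsR_def by auto
qed




lemma rowGF:
  assumes "lo \<notin> R" "s \<in> alt_seqs k (e lo - mu lo)" "b \<in> confR k R e mu"
  shows "rowG lo e mu (rowF lo e mu (s, b)) = (s, b)"
proof -
  have len: "int (length s) = e lo - mu lo" using assms(2) unfolding alt_seqs_def by auto
  have b0: "b lo c = 0" for c using assms(1,3) unfolding confR_def cellsR_def by auto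
  have "map (\<lambda>p. rowF lo e mu (s, b) lo (mu lo + 1 + int p)) [0..<nat (e lo - mu lo)] = s"
    by (rule nth_equalityI) (use len in \<open>auto simp: rowF_def\<close>)
  moreover have "(\<lambda>i c. if i = lo then 0 else rowF lo e mu (s, b) i c) = b"
    using b0 by (auto simp: rowF_def fun_eq_iff)
  ultimately show ?thesis unfolding rowG_def by simp
qed

lemma rowFG:
  assumes "a \<in> confR k (insert lo R) e mu"
  shows "rowF lo e mu (rowG lo e mu a) = a"
proof -
  have a0: "\<forall>i c. (i, c) \<notin> cellsR (insert lo R) e mu \<longrightarrow> a i c = 0"
    using assms unfolding confR_def by auto
  show ?thesis
  proof (rule ext, rule ext)
    fix i c
    show "rowF lo e mu (rowG lo e mu a) i c = a i c"
    proof (cases "i = lo")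
      case True
      show ?thesis
      proof (cases "mu lo < c \<and> c \<le> e lo")
        case True
        then have "nat (c - mu lo - 1) < nat (e lo - mu lo)" by auto
        moreover have "mu lo + 1 + int (nat (c - mu lo - 1)) = c" using True by auto
        ultimately show ?thesis using True \<open>i = lo\<close> unfolding rowF_def rowG_def by simp
      next
        case False
        then show ?thesis using a0 \<open>i = lo\<close> unfolding rowF_def rowG_def cellsR_def by auto
      qed
    qed (simp add: rowF_def rowG_def)
  qed
qed

lemma prod_lemma:
  assumes "\<forall>i. lo \<le> i \<and> i < n \<longrightarrow> even (mu i)"
  shows "gf_prod_list (map (\<lambda>i. gf_alt k (e i - mu i)) [lo..<n]) M = int (card {a \<in> confR k {lo..<n} e mu. wR {lo..<n} e mu a = M})
       \<and> finite {a \<in> confR k {lo..<n} e mu. wR {lo..<n} e mu a = M}"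
  using assms
proof (induction "n - lo" arbitrary: lo M)
  case 0
  then have "[lo..<n] = []" "{lo..<n} = {}" by auto
  moreover have "confR k {} e mu = {\<lambda>i c. 0}" unfolding confR_def cellsR_def by auto
  moreover have "wR {} e mu (\<lambda>i c. 0) = ({#}, {#})" unfolding wR_def wpart_def cellsR_def by simp
  ultimately have "{a \<in> confR k {lo..<n} e mu. wR {lo..<n} e mu a = M} = (if M = ({#}, {#}) then {\<lambda>i c. 0} else {})"
    by auto
  then show ?case using \<open>[lo..<n] = []\<close> unfolding gf_prod_list_def gf_one_def by auto
next
  case (Suc d)
  let ?R = "{Suc lo..<n}"
  have lon: "lo < n" using Suc by auto
  have ins: "{lo..<n} = insert lo ?R" using lon by auto
  have lst: "[lo..<n] = lo # [Suc lo..<n]" using lon by (simp add: upt_conv_Cons)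
  have notin: "lo \<notin> ?R" by simp
  have ev: "even (mu lo)" using Suc.prems lon by auto
  have IH: "gf_prod_list (map (\<lambda>i. gf_alt k (e i - mu i)) [Suc lo..<n]) N = int (card {a \<in> confR k ?R e mu. wR ?R e mu a = N})
       \<and> finite {a \<in> confR k ?R e mu. wR ?R e mu a = N}" for N
    using Suc.hyps(1)[of "Suc lo" N] Suc.hyps(2) Suc.prems by auto
  have IHf: "gf_prod_list (map (\<lambda>i. gf_alt k (e i - mu i)) [Suc lo..<n]) = (\<lambda>N. int (card {a \<in> confR k ?R e mu. wR ?R e mu a = N}))"
    using IH by auto
  have altf: "gf_alt k (e lo - mu lo) = (\<lambda>N. int (card {s \<in> alt_seqs k (e lo - mu lo). seq_weight s = N}))"
    unfolding gf_alt_def by auto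
  let ?P = "{(x,y). x\<in>alt_seqs k (e lo - mu lo) \<and> y\<in>confR k ?R e mu \<and> fst (seq_weight x) + fst (wR ?R e mu y) = fst M \<and> snd (seq_weight x) + snd (wR ?R e mu y) = snd M}"
  have GM: "gf_prod_list (map (\<lambda>i. gf_alt k (e i - mu i)) [lo..<n]) M = int (card ?P)" "finite ?P"
    using gf_mult_card[of "alt_seqs k (e lo - mu lo)" seq_weight "confR k ?R e mu" "wR ?R e mu" M]
      finite_alt_fiber IH
    unfolding lst gf_prod_list_def by (auto simp: IHf[unfolded gf_prod_list_def] altf)
  let ?Fib = "{a \<in> confR k (insert lo ?R) e mu. wR (insert lo ?R) e mu a = M}"
  have bij: "bij_betw (rowF lo e mu) ?P ?Fib"
  proof (rule bij_betw_byWitness[where f'="rowG lo e mu"])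
    show "\<forall>x\<in>?P. rowG lo e mu (rowF lo e mu x) = x" using rowGF[OF notin] by auto
    show "\<forall>a\<in>?Fib. rowF lo e mu (rowG lo e mu a) = a" using rowFG by auto
    show "rowF lo e mu ` ?P \<subseteq> ?Fib"
    proof
      fix z assume "z \<in> rowF lo e mu ` ?P"
      then obtain s b where z: "z = rowF lo e mu (s, b)" and h: "s \<in> alt_seqs k (e lo - mu lo)" "b \<in> confR k ?R e mu"
        "fst (seq_weight s) + fst (wR ?R e mu b) = fst M" "snd (seq_weight s) + snd (wR ?R e mu b) = snd M"
        by auto
      have c: "rowF lo e mu (s, b) \<in> confR k (insert lo ?R) e mu" by (rule rowF_conf[OF notin ev h(1,2)])
      have len: "int (length s) = e lo - mu lo" using h(1) unfolding alt_seqs_def by auto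
      have wb: "wR ?R e mu (rowF lo e mu (s, b)) = wR ?R e mu b"
        unfolding wR_def by (auto intro!: wpart_cong simp: rowF_def)
      have W: "wR (insert lo ?R) e mu (rowF lo e mu (s, b)) = (fst (seq_weight s) + fst (wR ?R e mu (rowF lo e mu (s, b))), snd (seq_weight s) + snd (wR ?R e mu (rowF lo e mu (s, b))))"
        by (rule wR_insert) (use len ev in \<open>auto simp: rowF_def\<close>)
      have "wR (insert lo ?R) e mu (rowF lo e mu (s, b)) = M"
        using W h(3,4) wb by (auto simp: prod_eq_iff)
      then show "z \<in> ?Fib" using c z by simp
    qed
    show "rowG lo e mu ` ?Fib \<subseteq> ?P"
    proof
      fix z assume "z \<in> rowG lo e mu ` ?Fib"
      then obtain a where z: "z = rowG lo e mu a" and h: "a \<in> confR k (insert lo ?R) e mu" "M = wR (insert lo ?R) e mu a"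
        by auto
      have s: "fst (rowG lo e mu a) \<in> alt_seqs k (e lo - mu lo)" and b: "snd (rowG lo e mu a) \<in> confR k ?R e mu"
        using rowG_conf[OF notin h(1) ev] by auto
      have le: "mu lo \<le> e lo" using h(1) unfolding confR_def by auto
      have wb: "wR ?R e mu (snd (rowG lo e mu a)) = wR ?R e mu a"
        unfolding wR_def by (auto intro!: wpart_cong simp: rowG_def)
      have W: "wR (insert lo ?R) e mu a = (fst (seq_weight (fst (rowG lo e mu a))) + fst (wR ?R e mu a), snd (seq_weight (fst (rowG lo e mu a))) + snd (wR ?R e mu a))"
        by (rule wR_insert) (use le ev in \<open>auto simp: rowG_def\<close>)
      show "z \<in> ?P"
        using s b W wb h(2) unfolding z by (cases "rowG lo e mu a") auto
    qed
  qed
  show ?case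
    using bij_betw_same_card[OF bij] bij_betw_finite[OF bij] GM ins by simp
qed




definition oc :: "int \<Rightarrow> int" where "oc x = (if odd x then x else x + 1)"
definition ec :: "int \<Rightarrow> int" where "ec x = (if odd x then x + 1 else x)"

definition viol :: "(nat \<Rightarrow> int) \<Rightarrow> (nat \<Rightarrow> int) \<Rightarrow> (nat \<Rightarrow> int \<Rightarrow> int) \<Rightarrow> nat \<Rightarrow> int \<Rightarrow> bool" where
  "viol mu e a j x \<longleftrightarrow> mu j \<le> oc x \<and> oc x \<le> e j + 1 \<and> mu (Suc j) \<le> ec x \<and> ec x \<le> e (Suc j) + 1 \<and>
     (oc x = e j + 1 \<or> ec x = mu (Suc j) \<or> ec x = e (Suc j) + 1 \<or> a j (oc x) \<le> a (Suc j) (ec x))"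

definition VS :: "nat \<Rightarrow> (nat \<Rightarrow> int) \<Rightarrow> (nat \<Rightarrow> int) \<Rightarrow> (nat \<Rightarrow> int \<Rightarrow> int) \<Rightarrow> (nat \<times> int) set" where
  "VS m mu e a = {(j, x). 1 \<le> j \<and> j < m \<and> viol mu e a j x}"

definition xmin where "xmin m mu e a = Min (snd ` VS m mu e a)"
definition imin where "imin m mu e a = (let J = {j. (j, xmin m mu e a) \<in> VS m mu e a} in
   if odd (xmin m mu e a) then Max J else Min J)"

definition swp :: "(nat \<Rightarrow> int \<Rightarrow> int) \<Rightarrow> nat \<Rightarrow> int \<Rightarrow> (nat \<Rightarrow> int \<Rightarrow> int)" where
  "swp a i x = (\<lambda>j c. if j = i \<and> x < c then a (Suc i) c else if j = Suc i \<and> x < c then a i c else a j c)"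

lemma swp_swp: "swp (swp a i x) i x = a"
  unfolding swp_def by (auto simp: fun_eq_iff)

lemma finite_VS: "finite (VS m mu e a)"
proof -
  have "VS m mu e a \<subseteq> (\<Union>j\<in>{..<m}. {j} \<times> {mu j - 1 .. e j + 1})"
    unfolding VS_def viol_def oc_def by (auto split: if_splits)
  moreover have "finite (\<Union>j\<in>{..<m}. {j} \<times> {mu j - 1 .. e j + 1})" by auto
  ultimately show ?thesis by (rule finite_subset)
qed

lemma viol_local:
  assumes "mu' j = mu j" "mu' (Suc j) = mu (Suc j)"
    and "oc x \<le> e' j + 1 \<longleftrightarrow> oc x \<le> e j + 1" "oc x = e' j + 1 \<longleftrightarrow> oc x = e j + 1"
    and "ec x \<le> e' (Suc j) + 1 \<longleftrightarrow> ec x \<le> e (Suc j) + 1" "ec x = e' (Suc j) + 1 \<longleftrightarrow> ec x = e (Suc j) + 1"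
    and "a' j (oc x) = a j (oc x)" "a' (Suc j) (ec x) = a (Suc j) (ec x)"
  shows "viol mu' e' a' j x \<longleftrightarrow> viol mu e a j x"
  using assms unfolding viol_def by simp

locale zz =
  fixes k :: enat and m :: nat and mu e :: "nat \<Rightarrow> int" and a :: "nat \<Rightarrow> int \<Rightarrow> int"
  assumes mu_even: "\<And>j. 1 \<le> j \<Longrightarrow> j \<le> m \<Longrightarrow> even (mu j)"
    and mu_dec: "\<And>j. 1 \<le> j \<Longrightarrow> j < m \<Longrightarrow> mu (Suc j) < mu j"
    and e_par: "(\<forall>j\<in>{1..m}. odd (e j) \<and> (\<forall>i\<in>{1..m}. mu i \<le> e j)) \<or> (\<forall>j\<in>{1..m}. even (e j))"
    and conf: "a \<in> confR k {1..m} e mu"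
begin

lemma e_ge: "1 \<le> j \<Longrightarrow> j \<le> m \<Longrightarrow> mu j \<le> e j"
  using conf unfolding confR_def by auto

lemma a_zero: "\<not> (1 \<le> j \<and> j \<le> m \<and> mu j < c \<and> c \<le> e j) \<Longrightarrow> a j c = 0"
  using conf unfolding confR_def cellsR_def by auto

lemma a_rng: "1 \<le> j \<Longrightarrow> j \<le> m \<Longrightarrow> mu j < c \<Longrightarrow> c \<le> e j \<Longrightarrow> in_range k (a j c)"
  using conf unfolding confR_def cellsR_def by auto

lemma alt_odd: "1 \<le> j \<Longrightarrow> j \<le> m \<Longrightarrow> mu j < c \<Longrightarrow> c + 1 \<le> e j \<Longrightarrow> odd c \<Longrightarrow> a j c \<le> a j (c + 1)"
  using conf unfolding confR_def cellsR_def by fastforce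

lemma alt_even: "1 \<le> j \<Longrightarrow> j \<le> m \<Longrightarrow> mu j < c \<Longrightarrow> c + 1 \<le> e j \<Longrightarrow> even c \<Longrightarrow> a j (c + 1) \<le> a j c"
  using conf unfolding confR_def cellsR_def by fastforce

context
  assumes ne: "VS m mu e a \<noteq> {}"
begin

abbreviation "x0 \<equiv> xmin m mu e a"
abbreviation "i0 \<equiv> imin m mu e a"

lemma x0_in: "x0 \<in> snd ` VS m mu e a"
  unfolding xmin_def using finite_VS ne by (intro Min_in) auto

lemma x0_min: "1 \<le> j \<Longrightarrow> j < m \<Longrightarrow> y < x0 \<Longrightarrow> \<not> viol mu e a j y"
proof
  assume "1 \<le> j" "j < m" "y < x0" "viol mu e a j y"
  then have "y \<in> snd ` VS m mu e a" unfolding VS_def by force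
  then have "x0 \<le> y" unfolding xmin_def using finite_VS by (intro Min_le) auto
  then show False using \<open>y < x0\<close> by simp
qed

lemma J_props: "i0 \<in> {j. (j, x0) \<in> VS m mu e a}"
  "odd x0 \<Longrightarrow> (j, x0) \<in> VS m mu e a \<Longrightarrow> j \<le> i0"
  "even x0 \<Longrightarrow> (j, x0) \<in> VS m mu e a \<Longrightarrow> i0 \<le> j"
proof -
  let ?J = "{j. (j, x0) \<in> VS m mu e a}"
  have fin: "finite ?J" by (rule finite_subset[of _ "{..<m}"]) (auto simp: VS_def)
  have nej: "?J \<noteq> {}" using x0_in by force
  show "i0 \<in> ?J" unfolding imin_def Let_def using Max_in[OF fin nej] Min_in[OF fin nej] by auto
  show "odd x0 \<Longrightarrow> (j, x0) \<in> VS m mu e a \<Longrightarrow> j \<le> i0" unfolding imin_def Let_def using fin by auto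
  show "even x0 \<Longrightarrow> (j, x0) \<in> VS m mu e a \<Longrightarrow> i0 \<le> j" unfolding imin_def Let_def using fin by auto
qed

lemma i0_range: "1 \<le> i0" "i0 < m" and v0: "viol mu e a i0 x0"
  using J_props(1) unfolding VS_def by auto

lemma mu_le_x0: "mu i0 \<le> x0"
proof -
  have "mu i0 \<le> oc x0" using v0 unfolding viol_def by auto
  moreover have "even (mu i0)" using mu_even i0_range by auto
  ultimately show ?thesis unfolding oc_def by (auto split: if_splits) presburger?
qed


lemma mu_Suc: "mu (Suc i0) < mu i0" using mu_dec i0_range by auto
lemma mu_i0_even: "even (mu i0)" using mu_even i0_range by auto
lemma e_i0: "mu i0 \<le> e i0" using e_ge i0_range by auto
lemma e_Si0: "mu (Suc i0) \<le> e (Suc i0)" using e_ge i0_range by auto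

lemma x0_le_eS: "x0 \<le> e (Suc i0)"
proof (rule ccontr)
  assume "\<not> x0 \<le> e (Suc i0)"
  have v: "mu i0 \<le> oc x0" "oc x0 \<le> e i0 + 1" "mu (Suc i0) \<le> ec x0" "ec x0 \<le> e (Suc i0) + 1"
    using v0 unfolding viol_def by auto
  have "ec x0 \<ge> x0" unfolding ec_def by auto
  then have ecq: "ec x0 = e (Suc i0) + 1" and ex: "even x0"
    using v(4) \<open>\<not> x0 \<le> e (Suc i0)\<close> unfolding ec_def by (auto split: if_splits)
  then have x0e: "x0 = e (Suc i0) + 1" unfolding ec_def by auto
  then have "odd (e (Suc i0))" using ex by auto
  then have "\<forall>j\<in>{1..m}. odd (e j) \<and> (\<forall>i\<in>{1..m}. mu i \<le> e j)" using e_par i0_range by auto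
  then have "mu i0 \<le> e (Suc i0)" using i0_range by auto
  have "viol mu e a i0 (x0 - 1)"
    unfolding viol_def oc_def ec_def using ex x0e v \<open>mu i0 \<le> e (Suc i0)\<close>
    by (auto simp: oc_def ec_def split: if_splits)
  then show False using x0_min i0_range by auto
qed

lemma x0_le_e: "x0 \<le> e i0"
proof (rule ccontr)
  assume "\<not> x0 \<le> e i0"
  have v: "mu i0 \<le> oc x0" "oc x0 \<le> e i0 + 1" "mu (Suc i0) \<le> ec x0" "ec x0 \<le> e (Suc i0) + 1"
    using v0 unfolding viol_def by auto
  have "oc x0 \<ge> x0" unfolding oc_def by auto
  then have ocq: "oc x0 = e i0 + 1" and ox: "odd x0"
    using v(2) \<open>\<not> x0 \<le> e i0\<close> unfolding oc_def by (auto split: if_splits)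
  then have x0e: "x0 = e i0 + 1" unfolding oc_def by auto
  have "viol mu e a i0 (x0 - 1)"
    unfolding viol_def using ox x0e v e_i0 mu_Suc by (auto simp: oc_def ec_def split: if_splits)
  then show False using x0_min i0_range by auto
qed

lemma nv: "\<not> viol mu e a i0 (x0 - 1)" using x0_min i0_range by auto

lemma seam1: "odd x0 \<Longrightarrow> mu i0 < x0 \<Longrightarrow> x0 + 1 \<le> e (Suc i0) \<Longrightarrow> a i0 x0 \<le> a (Suc i0) (x0 + 1)"
  using v0 x0_le_e mu_Suc mu_le_x0 unfolding viol_def oc_def ec_def by auto

lemma seam2: "even x0 \<Longrightarrow> mu i0 < x0 \<Longrightarrow> x0 + 1 \<le> e (Suc i0) \<Longrightarrow> a (Suc i0) (x0 + 1) \<le> a i0 x0"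
proof -
  assume h: "even x0" "mu i0 < x0" "x0 + 1 \<le> e (Suc i0)"
  have "\<not> (x0 - 1 = e i0 + 1 \<or> x0 = mu (Suc i0) \<or> x0 = e (Suc i0) + 1 \<or> a i0 (x0 - 1) \<le> a (Suc i0) x0)"
    using nv h x0_le_e mu_Suc unfolding viol_def oc_def ec_def by auto
  then have 1: "a (Suc i0) x0 < a i0 (x0 - 1)" by auto
  have "mu i0 < x0 - 1" using h mu_i0_even by presburger
  then have 2: "a i0 (x0 - 1) \<le> a i0 x0" using alt_odd[of i0 "x0 - 1"] i0_range x0_le_e h by auto
  have 3: "a (Suc i0) (x0 + 1) \<le> a (Suc i0) x0" using alt_even[of "Suc i0" x0] i0_range h mu_Suc by auto
  show ?thesis using 1 2 3 by simp
qed

lemma seam3: "odd x0 \<Longrightarrow> mu (Suc i0) < x0 \<Longrightarrow> x0 \<le> e (Suc i0) \<Longrightarrow> x0 + 1 \<le> e i0 \<Longrightarrow> a (Suc i0) x0 \<le> a i0 (x0 + 1)"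
proof -
  assume h: "odd x0" "mu (Suc i0) < x0" "x0 \<le> e (Suc i0)" "x0 + 1 \<le> e i0"
  have "\<not> (x0 = e i0 + 1 \<or> x0 - 1 = mu (Suc i0) \<or> x0 - 1 = e (Suc i0) + 1 \<or> a i0 x0 \<le> a (Suc i0) (x0 - 1))"
    using nv h mu_le_x0 unfolding viol_def oc_def ec_def by auto
  then have 1: "a (Suc i0) (x0 - 1) < a i0 x0" and ne1: "x0 - 1 \<noteq> mu (Suc i0)" by auto
  have 2: "a (Suc i0) x0 \<le> a (Suc i0) (x0 - 1)"
    using alt_even[of "Suc i0" "x0 - 1"] i0_range h ne1 by auto
  have "mu i0 < x0" using mu_le_x0 mu_i0_even h by presburger
  then have 3: "a i0 x0 \<le> a i0 (x0 + 1)" using alt_odd[of i0 x0] i0_range h by auto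
  show ?thesis using 1 2 3 by simp
qed

lemma seam4: "even x0 \<Longrightarrow> mu (Suc i0) < x0 \<Longrightarrow> x0 + 1 \<le> e i0 \<Longrightarrow> a i0 (x0 + 1) \<le> a (Suc i0) x0"
  using v0 x0_le_eS unfolding viol_def oc_def ec_def by auto


abbreviation "tr \<equiv> Transposition.transpose i0 (Suc i0)"
abbreviation "e' \<equiv> e \<circ> tr"
abbreviation "a' \<equiv> swp a i0 x0"

lemma e'_simps: "e' i0 = e (Suc i0)" "e' (Suc i0) = e i0" "j \<noteq> i0 \<Longrightarrow> j \<noteq> Suc i0 \<Longrightarrow> e' j = e j"
  by auto

lemma a'_simps: "c \<le> x0 \<Longrightarrow> a' j c = a j c"
  "x0 < c \<Longrightarrow> a' i0 c = a (Suc i0) c" "x0 < c \<Longrightarrow> a' (Suc i0) c = a i0 c"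
  "j \<noteq> i0 \<Longrightarrow> j \<noteq> Suc i0 \<Longrightarrow> a' j c = a j c"
  unfolding swp_def by auto

lemma new_zero: "\<not> (1 \<le> j \<and> j \<le> m \<and> mu j < c \<and> c \<le> e' j) \<Longrightarrow> a' j c = 0"
proof -
  assume h: "\<not> (1 \<le> j \<and> j \<le> m \<and> mu j < c \<and> c \<le> e' j)"
  have r: "1 \<le> i0" "Suc i0 \<le> m" using i0_range by auto
  consider "j = i0" | "j = Suc i0" | "j \<noteq> i0" "j \<noteq> Suc i0" by blast
  then show ?thesis
  proof cases
    case 1
    then show ?thesis
    proof (cases "x0 < c")
      case True
      then show ?thesis using h 1 r mu_le_x0 mu_Suc by (auto simp: a'_simps intro!: a_zero)
    next
      case False
      then show ?thesis using h 1 r x0_le_eS by (auto simp: a'_simps intro!: a_zero)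
    qed
  next
    case 2
    then show ?thesis
    proof (cases "x0 < c")
      case True
      then show ?thesis using h 2 r mu_le_x0 mu_Suc by (auto simp: a'_simps intro!: a_zero)
    next
      case False
      then show ?thesis using h 2 r x0_le_e by (auto simp: a'_simps intro!: a_zero)
    qed
  next
    case 3
    then show ?thesis using h by (auto simp: a'_simps intro!: a_zero)
  qed
qed

lemma new_rng: "1 \<le> j \<Longrightarrow> j \<le> m \<Longrightarrow> mu j < c \<Longrightarrow> c \<le> e' j \<Longrightarrow> in_range k (a' j c)"
proof -
  assume h: "1 \<le> j" "j \<le> m" "mu j < c" "c \<le> e' j"
  have r: "1 \<le> i0" "Suc i0 \<le> m" using i0_range by auto
  consider "j = i0" | "j = Suc i0" | "j \<noteq> i0" "j \<noteq> Suc i0" by blast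
  then show ?thesis
  proof cases
    case 1
    then show ?thesis
    proof (cases "x0 < c")
      case True
      then show ?thesis using h 1 r mu_le_x0 mu_Suc by (auto simp: a'_simps intro!: a_rng)
    next
      case False
      then show ?thesis using h 1 r x0_le_e by (auto simp: a'_simps intro!: a_rng)
    qed
  next
    case 2
    then show ?thesis
    proof (cases "x0 < c")
      case True
      then show ?thesis using h 2 r mu_le_x0 mu_Suc by (auto simp: a'_simps intro!: a_rng)
    next
      case False
      then show ?thesis using h 2 r x0_le_eS by (auto simp: a'_simps intro!: a_rng)
    qed
  next
    case 3
    then show ?thesis using h by (auto simp: a'_simps intro!: a_rng)
  qed
qed

lemma new_alt: "1 \<le> j \<Longrightarrow> j \<le> m \<Longrightarrow> mu j < c \<Longrightarrow> c + 1 \<le> e' j \<Longrightarrow>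
   (if odd c then a' j c \<le> a' j (c + 1) else a' j c \<ge> a' j (c + 1))"
proof -
  assume h: "1 \<le> j" "j \<le> m" "mu j < c" "c + 1 \<le> e' j"
  have r: "1 \<le> i0" "Suc i0 \<le> m" using i0_range by auto
  have old: "1 \<le> j' \<Longrightarrow> j' \<le> m \<Longrightarrow> mu j' < c \<Longrightarrow> c + 1 \<le> e j' \<Longrightarrow>
     (if odd c then a j' c \<le> a j' (c + 1) else a j' c \<ge> a j' (c + 1))" for j'
    using alt_odd alt_even by auto
  consider "j = i0" | "j = Suc i0" | "j \<noteq> i0" "j \<noteq> Suc i0" by blast
  then show ?thesis
  proof cases
    case 1
    consider "c + 1 \<le> x0" | "x0 < c" | "c = x0" by linarith
    then show ?thesis
    proof cases
      case 1
      then show ?thesis using h \<open>j = i0\<close> r x0_le_e old[of i0] by (auto simp: a'_simps)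
    next
      case 2
      then show ?thesis using h \<open>j = i0\<close> r mu_le_x0 mu_Suc old[of "Suc i0"] by (auto simp: a'_simps)
    next
      case 3
      then show ?thesis using h \<open>j = i0\<close> seam1 seam2 by (auto simp: a'_simps)
    qed
  next
    case 2
    consider "c + 1 \<le> x0" | "x0 < c" | "c = x0" by linarith
    then show ?thesis
    proof cases
      case 1
      then show ?thesis using h \<open>j = Suc i0\<close> r x0_le_eS old[of "Suc i0"] by (auto simp: a'_simps)
    next
      case 2
      then show ?thesis using h \<open>j = Suc i0\<close> r mu_le_x0 mu_Suc old[of i0] by (auto simp: a'_simps)
    next
      case 3
      then show ?thesis using h \<open>j = Suc i0\<close> seam3 seam4 x0_le_eS by (auto simp: a'_simps)
    qed
  next
    case 3
    then show ?thesis using h old[of j] by (auto simp: a'_simps)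
  qed
qed

lemma new_ge: "1 \<le> j \<Longrightarrow> j \<le> m \<Longrightarrow> mu j \<le> e' j"
proof -
  assume h: "1 \<le> j" "j \<le> m"
  consider "j = i0" | "j = Suc i0" | "j \<noteq> i0" "j \<noteq> Suc i0" by blast
  then show ?thesis
    using h e_ge mu_le_x0 x0_le_eS e_i0 mu_Suc by cases (auto)
qed

lemma swp_conf: "a' \<in> confR k {1..m} e' mu"
  unfolding confR_def cellsR_def
  using new_zero new_rng new_alt new_ge by auto


lemma tr_simps: "tr i0 = Suc i0" "tr (Suc i0) = i0" "j \<noteq> i0 \<Longrightarrow> j \<noteq> Suc i0 \<Longrightarrow> tr j = j"
  by auto

lemma swp_weight: "wpart P {1..m} e' mu a' = wpart P {1..m} e mu a"
proof -
  let ?h = "\<lambda>(j, c). if x0 < c then (tr j, c) else (j, c)"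
  let ?S = "{(i, c) \<in> cellsR {1..m} e' mu. P c}" and ?T = "{(i, c) \<in> cellsR {1..m} e mu. P c}"
  have r: "1 \<le> i0" "Suc i0 \<le> m" using i0_range by auto
  have hh: "?h (?h z) = z" for z by (cases z) auto
  have ST: "?h z \<in> ?T" if "z \<in> ?S" for z
  proof -
    obtain j c where z: "z = (j, c)" by (cases z)
    have h: "1 \<le> j" "j \<le> m" "mu j < c" "c \<le> e' j" "P c" using that z unfolding cellsR_def by auto
    consider "j = i0" | "j = Suc i0" | "j \<noteq> i0" "j \<noteq> Suc i0" by blast
    then show ?thesis
      using h r mu_le_x0 mu_Suc x0_le_e x0_le_eS unfolding z cellsR_def by cases auto
  qed
  have TS: "?h z \<in> ?S" if "z \<in> ?T" for z
  proof -
    obtain j c where z: "z = (j, c)" by (cases z)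
    have h: "1 \<le> j" "j \<le> m" "mu j < c" "c \<le> e j" "P c" using that z unfolding cellsR_def by auto
    consider "j = i0" | "j = Suc i0" | "j \<noteq> i0" "j \<noteq> Suc i0" by blast
    then show ?thesis
      using h r mu_le_x0 mu_Suc x0_le_e x0_le_eS unfolding z cellsR_def by cases auto
  qed
  have val: "(case ?h z of (i, c) \<Rightarrow> {# a i c #}) = (case z of (i, c) \<Rightarrow> {# a' i c #})" for z
  proof -
    obtain j c where z: "z = (j, c)" by (cases z)
    consider "j = i0" | "j = Suc i0" | "j \<noteq> i0" "j \<noteq> Suc i0" by blast
    then show ?thesis unfolding z by cases (auto simp: a'_simps)
  qed
  show ?thesis unfolding wpart_def
    by (rule sum.reindex_bij_witness[where i = ?h and j = ?h]) (use hh ST TS val in auto)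
qed

lemma loc: "r \<notin> {i0, Suc i0} \<or> col \<le> x0 \<Longrightarrow>
   (col \<le> e' r + 1 \<longleftrightarrow> col \<le> e r + 1) \<and> (col = e' r + 1 \<longleftrightarrow> col = e r + 1) \<and> a' r col = a r col"
proof -
  assume h: "r \<notin> {i0, Suc i0} \<or> col \<le> x0"
  consider "r = i0" | "r = Suc i0" | "r \<noteq> i0" "r \<noteq> Suc i0" by blast
  then show ?thesis using h x0_le_e x0_le_eS by cases (auto simp: a'_simps)
qed

lemma viol_same: "r1 \<notin> {i0, Suc i0} \<or> oc y \<le> x0 \<Longrightarrow> r1 = j \<Longrightarrow> Suc j \<notin> {i0, Suc i0} \<or> ec y \<le> x0 \<Longrightarrow>
   viol mu e' a' j y \<longleftrightarrow> viol mu e a j y"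
  apply (rule viol_local)
  using loc[of j "oc y"] loc[of "Suc j" "ec y"] by auto

lemma new_VS: "VS m mu e' a' \<noteq> {}" "xmin m mu e' a' = x0" "imin m mu e' a' = i0"
proof -
  have v1: "viol mu e' a' i0 x0"
  proof (cases "odd x0")
    case True
    show ?thesis
    proof (cases "x0 = e i0")
      case True
      then show ?thesis using \<open>odd x0\<close> mu_le_x0 x0_le_eS mu_Suc unfolding viol_def oc_def ec_def by auto
    next
      case False
      have "mu i0 < x0" using mu_le_x0 mu_i0_even \<open>odd x0\<close> by presburger
      then have "a i0 x0 \<le> a i0 (x0 + 1)" using alt_odd[of i0 x0] i0_range False x0_le_e \<open>odd x0\<close> by auto
      then show ?thesis using \<open>odd x0\<close> mu_le_x0 x0_le_eS x0_le_e mu_Suc unfolding viol_def oc_def ec_def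
        by (auto simp: a'_simps)
    qed
  next
    case False
    show ?thesis
    proof (cases "x0 = e (Suc i0)")
      case True
      then show ?thesis using \<open>\<not> odd x0\<close> mu_le_x0 x0_le_e mu_Suc unfolding viol_def oc_def ec_def by auto
    next
      case F2: False
      have "a (Suc i0) (x0 + 1) \<le> a (Suc i0) x0"
        using alt_even[of "Suc i0" x0] i0_range F2 x0_le_eS False mu_le_x0 mu_Suc by auto
      then show ?thesis using False mu_le_x0 x0_le_eS x0_le_e mu_Suc unfolding viol_def oc_def ec_def
        by (auto simp: a'_simps)
    qed
  qed
  have iv: "(i0, x0) \<in> VS m mu e' a'" using v1 i0_range unfolding VS_def by auto
  then show "VS m mu e' a' \<noteq> {}" by auto
  have lowy: "\<not> viol mu e' a' j y" if "1 \<le> j" "j < m" "y < x0" for j y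
  proof -
    have "oc y \<le> x0" "ec y \<le> x0" using that unfolding oc_def ec_def by auto
    then have "viol mu e' a' j y \<longleftrightarrow> viol mu e a j y" by (intro viol_same) auto
    then show ?thesis using x0_min that by auto
  qed
  have xd: "xmin m mu e' a' = Min (snd ` VS m mu e' a')" by (rule xmin_def)
  show xm: "xmin m mu e' a' = x0" unfolding xd
  proof (rule Min_eqI)
    show "finite (snd ` VS m mu e' a')" using finite_VS by auto
    show "x0 \<in> snd ` VS m mu e' a'" using iv by force
    fix y assume "y \<in> snd ` VS m mu e' a'"
    then obtain j where "(j, y) \<in> VS m mu e' a'" by auto
    then show "x0 \<le> y" using lowy unfolding VS_def by force
  qed
  let ?J = "{j. (j, x0) \<in> VS m mu e' a'}"
  have finJ: "finite ?J" by (rule finite_subset[of _ "{..<m}"]) (auto simp: VS_def)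
  have i0J: "i0 \<in> ?J" using iv by auto
  have id: "imin m mu e' a' = (if odd (xmin m mu e' a') then Max ?J else Min ?J)"
    unfolding xm by (simp only: imin_def[of m mu e' a'] Let_def xm)
  show "imin m mu e' a' = i0"
  proof (cases "odd x0")
    case True
    have "Max ?J = i0"
    proof (rule Max_eqI[OF finJ _ i0J])
      fix j assume "j \<in> ?J"
      then have j: "1 \<le> j" "j < m" "viol mu e' a' j x0" unfolding VS_def by auto
      show "j \<le> i0"
      proof (rule ccontr)
        assume "\<not> j \<le> i0"
        then have "viol mu e' a' j x0 \<longleftrightarrow> viol mu e a j x0"
          using True by (intro viol_same) (auto simp: oc_def)
        then have "(j, x0) \<in> VS m mu e a" using j unfolding VS_def by auto
        then show False using J_props(2)[OF True] \<open>\<not> j \<le> i0\<close> by auto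
      qed
    qed
    then show ?thesis unfolding id xm using True by simp
  next
    case False
    have "Min ?J = i0"
    proof (rule Min_eqI[OF finJ _ i0J])
      fix j assume "j \<in> ?J"
      then have j: "1 \<le> j" "j < m" "viol mu e' a' j x0" unfolding VS_def by auto
      show "i0 \<le> j"
      proof (rule ccontr)
        assume "\<not> i0 \<le> j"
        then have "viol mu e' a' j x0 \<longleftrightarrow> viol mu e a j x0"
          using False by (intro viol_same) (auto simp: ec_def)
        then have "(j, x0) \<in> VS m mu e a" using j unfolding VS_def by auto
        then show False using J_props(3)[of j] False \<open>\<not> i0 \<le> j\<close> by auto
      qed
    qed
    then show ?thesis unfolding id xm using False by simp
  qed
qed

end
end



lemma inv_sum:
  fixes f :: "'a \<Rightarrow> int"
  assumes fin: "finite X" and cl: "\<And>x. x \<in> X \<Longrightarrow> \<phi> x \<in> X" and inv: "\<And>x. x \<in> X \<Longrightarrow> \<phi> (\<phi> x) = x"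
    and neg: "\<And>x. x \<in> X \<Longrightarrow> \<phi> x \<noteq> x \<Longrightarrow> f (\<phi> x) = - f x"
  shows "(\<Sum>x\<in>X. f x) = (\<Sum>x\<in>{x\<in>X. \<phi> x = x}. f x)"
proof -
  let ?Y = "{x\<in>X. \<phi> x \<noteq> x}"
  have "(\<Sum>x\<in>?Y. f x) = (\<Sum>x\<in>?Y. f (\<phi> x))"
    by (rule sum.reindex_bij_witness[where i = \<phi> and j = \<phi>]) (use cl inv in auto)
  also have "\<dots> = (\<Sum>x\<in>?Y. - f x)" by (rule sum.cong) (use neg in auto)
  finally have "(\<Sum>x\<in>?Y. f x) = 0" by (simp add: sum_negf)
  moreover have "(\<Sum>x\<in>X. f x) = (\<Sum>x\<in>?Y. f x) + (\<Sum>x\<in>{x\<in>X. \<phi> x = x}. f x)"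
  proof -
    have "X = ?Y \<union> {x\<in>X. \<phi> x = x}" by auto
    then show ?thesis using fin by (metis (no_types, lifting) sum.union_disjoint finite_Un disjoint_iff mem_Collect_eq)
  qed
  ultimately show ?thesis by simp
qed

lemma mono_perm_id:
  assumes p: "\<sigma> permutes {1..m}" and mono: "\<forall>i. 1 \<le> i \<and> i < m \<longrightarrow> \<sigma> i < \<sigma> (Suc i)"
  shows "\<sigma> = id"
proof -
  have rng: "1 \<le> \<sigma> i \<and> \<sigma> i \<le> m" if "1 \<le> i" "i \<le> m" for i
    using permutes_in_image[OF p] that by auto
  have up: "i \<le> \<sigma> i" if "1 \<le> i" "i \<le> m" for i
    using that
  proof (induction i)
    case 0 then show ?case by simp
  next
    case (Suc i)
    show ?case
    proof (cases "i = 0")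
      case True then show ?thesis using rng[of 1] Suc by auto
    next
      case False
      then have "i \<le> \<sigma> i" using Suc by auto
      moreover have "\<sigma> i < \<sigma> (Suc i)" using mono Suc False by auto
      ultimately show ?thesis by simp
    qed
  qed
  have down: "\<sigma> (m - d) \<le> m - d" if "d < m" for d
    using that
  proof (induction d)
    case 0 then show ?case using rng[of m] by simp
  next
    case (Suc d)
    then have "\<sigma> (m - d) \<le> m - d" by simp
    moreover have "\<sigma> (m - Suc d) < \<sigma> (Suc (m - Suc d))" using mono Suc by auto
    moreover have "Suc (m - Suc d) = m - d" using Suc by auto
    ultimately show ?case by simp
  qed
  show ?thesis
  proof
    fix i
    show "\<sigma> i = id i"
    proof (cases "i \<in> {1..m}")
      case True
      then have "\<sigma> (m - (m - i)) \<le> m - (m - i)" using down[of "m - i"] by auto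
      then show ?thesis using up[of i] True by auto
    next
      case False
      then show ?thesis using permutes_not_in[OF p False] by simp
    qed
  qed
qed

definition phi :: "nat \<Rightarrow> (nat \<Rightarrow> int) \<Rightarrow> (nat \<Rightarrow> int) \<Rightarrow> (nat \<Rightarrow> nat) \<times> (nat \<Rightarrow> int \<Rightarrow> int) \<Rightarrow> (nat \<Rightarrow> nat) \<times> (nat \<Rightarrow> int \<Rightarrow> int)" where
  "phi m lam mu x = (let \<sigma> = fst x; a = snd x in
     if VS m mu (lam \<circ> \<sigma>) a = {} then x
     else (\<sigma> \<circ> Transposition.transpose (imin m mu (lam \<circ> \<sigma>) a) (Suc (imin m mu (lam \<circ> \<sigma>) a)),
           swp a (imin m mu (lam \<circ> \<sigma>) a) (xmin m mu (lam \<circ> \<sigma>) a)))"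



context
  fixes k :: enat and m :: nat and lam mu :: "nat \<Rightarrow> int"
  assumes h3: "\<forall>i \<in> {1..m}. mu i \<le> lam i"
    and h4: "\<forall>i \<in> {1..m}. even (mu i)"
    and h5: "\<forall>i j. 1 \<le> i \<and> i < j \<and> j \<le> m \<longrightarrow> mu j < mu i"
    and h6: "((\<forall>i j. 1 \<le> i \<and> i < j \<and> j \<le> m \<longrightarrow> lam i < lam j) \<and> (\<forall>i \<in> {1..m}. odd (lam i)))
       \<or> ((\<forall>i j. 1 \<le> i \<and> i < j \<and> j \<le> m \<longrightarrow> lam j < lam i) \<and> (\<forall>i \<in> {1..m}. even (lam i)))"
begin

lemma zz_inst: "\<sigma> permutes {1..m} \<Longrightarrow> a \<in> confR k {1..m} (lam \<circ> \<sigma>) mu \<Longrightarrow> zz k m mu (lam \<circ> \<sigma>) a"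
proof (unfold_locales)
  assume p: "\<sigma> permutes {1..m}" and c: "a \<in> confR k {1..m} (lam \<circ> \<sigma>) mu"
  show "\<And>j. 1 \<le> j \<Longrightarrow> j \<le> m \<Longrightarrow> even (mu j)" using h4 by auto
  show "\<And>j. 1 \<le> j \<Longrightarrow> j < m \<Longrightarrow> mu (Suc j) < mu j" using h5 by auto
  show "a \<in> confR k {1..m} (lam \<circ> \<sigma>) mu" by (rule c)
  have sr: "\<sigma> j \<in> {1..m}" if "j \<in> {1..m}" for j using permutes_in_image[OF p] that by auto
  show "(\<forall>j\<in>{1..m}. odd ((lam \<circ> \<sigma>) j) \<and> (\<forall>i\<in>{1..m}. mu i \<le> (lam \<circ> \<sigma>) j)) \<or> (\<forall>j\<in>{1..m}. even ((lam \<circ> \<sigma>) j))"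
    using h6
  proof
    assume A: "(\<forall>i j. 1 \<le> i \<and> i < j \<and> j \<le> m \<longrightarrow> lam i < lam j) \<and> (\<forall>i \<in> {1..m}. odd (lam i))"
    have "mu i \<le> lam j" if "i \<in> {1..m}" "j \<in> {1..m}" for i j
    proof -
      have "mu i \<le> mu 1"
      proof (cases "i = 1")
        case False then show ?thesis using h5[rule_format, of 1 i] that by auto
      qed simp
      also have "mu 1 \<le> lam 1" using h3 that by auto
      also have "lam 1 \<le> lam j"
      proof (cases "j = 1")
        case False then show ?thesis using A[THEN conjunct1, rule_format, of 1 j] that by auto
      qed simp
      finally show ?thesis .
    qed
    then show ?thesis using A sr by auto
  next
    assume B: "(\<forall>i j. 1 \<le> i \<and> i < j \<and> j \<le> m \<longrightarrow> lam j < lam i) \<and> (\<forall>i \<in> {1..m}. even (lam i))"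
    then show ?thesis using sr by auto
  qed
qed

lemma phi_bad:
  assumes p: "\<sigma> permutes {1..m}" and c: "a \<in> confR k {1..m} (lam \<circ> \<sigma>) mu" and ne: "VS m mu (lam \<circ> \<sigma>) a \<noteq> {}"
  defines "i0 \<equiv> imin m mu (lam \<circ> \<sigma>) a" and "x0 \<equiv> xmin m mu (lam \<circ> \<sigma>) a"
  defines "\<sigma>' \<equiv> \<sigma> \<circ> Transposition.transpose i0 (Suc i0)" and "a' \<equiv> swp a i0 x0"
  shows "phi m lam mu (\<sigma>, a) = (\<sigma>', a')" "\<sigma>' permutes {1..m}" "a' \<in> confR k {1..m} (lam \<circ> \<sigma>') mu"
    "wR {1..m} (lam \<circ> \<sigma>') mu a' = wR {1..m} (lam \<circ> \<sigma>) mu a"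
    "VS m mu (lam \<circ> \<sigma>') a' \<noteq> {}" "imin m mu (lam \<circ> \<sigma>') a' = i0" "xmin m mu (lam \<circ> \<sigma>') a' = x0"
    "sign \<sigma>' = - sign \<sigma>" "\<sigma>' \<noteq> \<sigma>"
proof -
  interpret zz k m mu "lam \<circ> \<sigma>" a by (rule zz_inst[OF p c])
  have eq: "lam \<circ> \<sigma>' = (lam \<circ> \<sigma>) \<circ> Transposition.transpose i0 (Suc i0)"
    unfolding \<sigma>'_def by (simp add: o_assoc)
  have r: "1 \<le> i0" "i0 < m" using i0_range[OF ne] unfolding i0_def by auto
  show "phi m lam mu (\<sigma>, a) = (\<sigma>', a')" unfolding phi_def Let_def \<sigma>'_def a'_def i0_def x0_def using ne by simp
  have tp: "Transposition.transpose i0 (Suc i0) permutes {1..m}" using r by (intro permutes_swap_id) auto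
  show "\<sigma>' permutes {1..m}" unfolding \<sigma>'_def by (rule permutes_compose[OF tp p])
  show "a' \<in> confR k {1..m} (lam \<circ> \<sigma>') mu" unfolding eq a'_def i0_def x0_def using swp_conf[OF ne] .
  show "wR {1..m} (lam \<circ> \<sigma>') mu a' = wR {1..m} (lam \<circ> \<sigma>) mu a"
    unfolding wR_def eq a'_def i0_def x0_def using swp_weight[OF ne] by simp
  show "VS m mu (lam \<circ> \<sigma>') a' \<noteq> {}" "imin m mu (lam \<circ> \<sigma>') a' = i0" "xmin m mu (lam \<circ> \<sigma>') a' = x0"
    unfolding eq a'_def i0_def x0_def using new_VS[OF ne] by simp_all
  have "sign \<sigma>' = sign \<sigma> * sign (Transposition.transpose i0 (Suc i0))"
    unfolding \<sigma>'_def by (rule sign_compose) (use p in \<open>auto intro: permutes_imp_permutation permutation_swap_id\<close>)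
  then show "sign \<sigma>' = - sign \<sigma>" by (simp add: sign_swap_id)
  have "\<sigma>' i0 = \<sigma> (Suc i0)" unfolding \<sigma>'_def by simp
  moreover have "\<sigma> (Suc i0) \<noteq> \<sigma> i0" using permutes_inj[OF p] by (auto dest: injD)
  ultimately show "\<sigma>' \<noteq> \<sigma>" by auto
qed

lemma phi_inv:
  assumes p: "\<sigma> permutes {1..m}" and c: "a \<in> confR k {1..m} (lam \<circ> \<sigma>) mu"
  shows "phi m lam mu (phi m lam mu (\<sigma>, a)) = (\<sigma>, a)"
proof (cases "VS m mu (lam \<circ> \<sigma>) a = {}")
  case True
  then show ?thesis unfolding phi_def Let_def by simp
next
  case False
  note B = phi_bad[OF p c False]
  let ?i0 = "imin m mu (lam \<circ> \<sigma>) a" and ?x0 = "xmin m mu (lam \<circ> \<sigma>) a"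
  have "phi m lam mu (phi m lam mu (\<sigma>, a)) = (\<sigma> \<circ> Transposition.transpose ?i0 (Suc ?i0) \<circ> Transposition.transpose ?i0 (Suc ?i0),
      swp (swp a ?i0 ?x0) ?i0 ?x0)"
    unfolding B(1) using B(5,6,7) unfolding phi_def Let_def by simp
  also have "\<dots> = (\<sigma>, a)" by (simp add: swp_swp comp_assoc)
  finally show ?thesis .
qed


end




context
  fixes k :: enat and m :: nat and lam mu :: "nat \<Rightarrow> int"
  assumes h3: "\<forall>i \<in> {1..m}. mu i \<le> lam i"
    and h4: "\<forall>i \<in> {1..m}. even (mu i)"
    and h5: "\<forall>i j. 1 \<le> i \<and> i < j \<and> j \<le> m \<longrightarrow> mu j < mu i"
    and h6: "((\<forall>i j. 1 \<le> i \<and> i < j \<and> j \<le> m \<longrightarrow> lam i < lam j) \<and> (\<forall>i \<in> {1..m}. odd (lam i)))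
       \<or> ((\<forall>i j. 1 \<le> i \<and> i < j \<and> j \<le> m \<longrightarrow> lam j < lam i) \<and> (\<forall>i \<in> {1..m}. even (lam i)))"
begin

lemma ev2: "even (x::int) \<Longrightarrow> even y \<Longrightarrow> x < y \<Longrightarrow> x + 2 \<le> y" by presburger
lemma od2: "odd (x::int) \<Longrightarrow> odd y \<Longrightarrow> x < y \<Longrightarrow> x + 2 \<le> y" by presburger

lemma cells_eq: "cells m lam mu = cellsR {1..m} lam mu"
  unfolding cells_def cellsR_def by auto

lemma tab_eq: "alt_tableaux k m lam mu = {a \<in> confR k {1..m} lam mu. VS m mu lam a = {}}"
proof (rule set_eqI)
  fix a :: "nat \<Rightarrow> int \<Rightarrow> int"
  let ?T1 = "\<forall>i c. odd c \<and> (i, c) \<in> cellsR {1..m} lam mu \<and> (i + 1, c - 1) \<in> cellsR {1..m} lam mu \<longrightarrow> a (i + 1) (c - 1) < a i c"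
  let ?T2 = "\<forall>i c. odd c \<and> (i, c) \<in> cellsR {1..m} lam mu \<and> (i + 1, c + 1) \<in> cellsR {1..m} lam mu \<longrightarrow> a (i + 1) (c + 1) < a i c"
  have tabI: "a \<in> alt_tableaux k m lam mu \<longleftrightarrow> a \<in> confR k {1..m} lam mu \<and> ?T1 \<and> ?T2"
    unfolding alt_tableaux_def confR_def cells_eq using h3 by auto
  have "VS m mu lam a = {} \<longleftrightarrow> ?T1 \<and> ?T2" if c: "a \<in> confR k {1..m} lam mu"
  proof
    assume V: "VS m mu lam a = {}"
    have nv: "\<not> viol mu lam a j x" if "1 \<le> j" "j < m" for j x using V that unfolding VS_def by auto
    show "?T1 \<and> ?T2"
    proof (intro conjI allI impI)
      fix i c assume h: "odd c \<and> (i, c) \<in> cellsR {1..m} lam mu \<and> (i + 1, c - 1) \<in> cellsR {1..m} lam mu"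
      show "a (i + 1) (c - 1) < a i c"
      proof (rule ccontr)
        assume "\<not> ?thesis"
        then have "viol mu lam a i (c - 1)" using h unfolding viol_def oc_def ec_def cellsR_def by auto
        then show False using nv h unfolding cellsR_def by auto
      qed
    next
      fix i c assume h: "odd c \<and> (i, c) \<in> cellsR {1..m} lam mu \<and> (i + 1, c + 1) \<in> cellsR {1..m} lam mu"
      show "a (i + 1) (c + 1) < a i c"
      proof (rule ccontr)
        assume "\<not> ?thesis"
        then have "viol mu lam a i c" using h unfolding viol_def oc_def ec_def cellsR_def by auto
        then show False using nv h unfolding cellsR_def by auto
      qed
    qed
  next
    assume T: "?T1 \<and> ?T2"
    show "VS m mu lam a = {}"
    proof (rule ccontr)
      assume "VS m mu lam a \<noteq> {}"
      then obtain j x where j: "1 \<le> j" "j < m" and v: "viol mu lam a j x" unfolding VS_def by auto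
      have vv: "mu j \<le> oc x" "oc x \<le> lam j + 1" "mu (Suc j) \<le> ec x" "ec x \<le> lam (Suc j) + 1"
        "oc x = lam j + 1 \<or> ec x = mu (Suc j) \<or> ec x = lam (Suc j) + 1 \<or> a j (oc x) \<le> a (Suc j) (ec x)"
        using v unfolding viol_def by auto
      have oco: "odd (oc x)" "even (ec x)" unfolding oc_def ec_def by auto
      have oe: "ec x = oc x + 1 \<or> ec x = oc x - 1" unfolding oc_def ec_def by auto
      have muj: "even (mu j)" "even (mu (Suc j))" "mu (Suc j) < mu j" using h4 h5 j by auto
      have n1: "oc x \<noteq> lam j + 1"
      proof
        assume eq: "oc x = lam j + 1"
        then have "even (lam j)" using oco by auto
        then have B: "(\<forall>i j. 1 \<le> i \<and> i < j \<and> j \<le> m \<longrightarrow> lam j < lam i) \<and> (\<forall>i \<in> {1..m}. even (lam i))"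
          using h6 j by auto
        then have "lam (Suc j) + 2 \<le> lam j" using j by (intro ev2) auto
        then show False using vv eq oe by auto
      qed
      have n2: "ec x \<noteq> mu (Suc j)"
      proof
        assume eq: "ec x = mu (Suc j)"
        have "mu (Suc j) + 2 \<le> mu j" using muj by (intro ev2) auto
        then show False using vv eq oe by auto
      qed
      have n3: "ec x \<noteq> lam (Suc j) + 1"
      proof
        assume eq: "ec x = lam (Suc j) + 1"
        then have "odd (lam (Suc j))" using oco by auto
        then have A: "(\<forall>i j. 1 \<le> i \<and> i < j \<and> j \<le> m \<longrightarrow> lam i < lam j) \<and> (\<forall>i \<in> {1..m}. odd (lam i))"
          using h6 j by auto
        then have "lam j + 2 \<le> lam (Suc j)" using j by (intro od2) auto
        then show False using vv eq oe by auto
      qed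
      have le: "a j (oc x) \<le> a (Suc j) (ec x)" using vv n1 n2 n3 by auto
      have mlt: "mu j < oc x"
      proof (rule ccontr)
        assume "\<not> mu j < oc x"
        then have "mu j = oc x" using vv(1) by simp
        then show False using muj(1) oco(1) by simp
      qed
      have c1: "(j, oc x) \<in> cellsR {1..m} lam mu" using vv n1 j mlt unfolding cellsR_def by auto
      have c2: "(Suc j, ec x) \<in> cellsR {1..m} lam mu" using vv n2 n3 j unfolding cellsR_def by auto
      show False
        using oe
      proof
        assume "ec x = oc x + 1"
        then show False using T c1 c2 le oco by fastforce
      next
        assume "ec x = oc x - 1"
        then show False using T c1 c2 le oco by fastforce
      qed
    qed
  qed
  then show "a \<in> alt_tableaux k m lam mu \<longleftrightarrow> a \<in> {a \<in> confR k {1..m} lam mu. VS m mu lam a = {}}"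
    using tabI by auto
qed


lemma nonid_bad:
  assumes p: "\<sigma> permutes {1..m}" and c: "a \<in> confR k {1..m} (lam \<circ> \<sigma>) mu" and ni: "\<sigma> \<noteq> id"
  shows "VS m mu (lam \<circ> \<sigma>) a \<noteq> {}"
proof -
  interpret zz k m mu "lam \<circ> \<sigma>" a by (rule zz_inst[OF h3 h4 h5 h6 p c])
  obtain i where i: "1 \<le> i" "i < m" "\<not> \<sigma> i < \<sigma> (Suc i)" using mono_perm_id[OF p] ni by blast
  have "\<sigma> i \<noteq> \<sigma> (Suc i)" using permutes_inj[OF p] by (auto dest: injD)
  then have lt: "\<sigma> (Suc i) < \<sigma> i" using i by auto
  have sr: "1 \<le> \<sigma> j \<and> \<sigma> j \<le> m" if "1 \<le> j" "j \<le> m" for j using permutes_in_image[OF p, of j] that by auto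
  have ge: "mu i \<le> lam (\<sigma> i)" "mu (Suc i) \<le> lam (\<sigma> (Suc i))" using e_ge[of i] e_ge[of "Suc i"] i by auto
  have md: "mu (Suc i) < mu i" using mu_dec i by auto
  show ?thesis using h6
  proof
    assume A: "(\<forall>i j. 1 \<le> i \<and> i < j \<and> j \<le> m \<longrightarrow> lam i < lam j) \<and> (\<forall>i \<in> {1..m}. odd (lam i))"
    have lt2: "lam (\<sigma> (Suc i)) < lam (\<sigma> i)" using A lt sr[of i] sr[of "Suc i"] i by auto
    have od: "odd (lam (\<sigma> (Suc i)))" using A sr[of "Suc i"] i by auto
    have "\<forall>j\<in>{1..m}. odd ((lam \<circ> \<sigma>) j) \<and> (\<forall>i\<in>{1..m}. mu i \<le> (lam \<circ> \<sigma>) j)"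
      using e_par od i by auto
    then have "mu i \<le> lam (\<sigma> (Suc i))" using i by auto
    then have "viol mu (lam \<circ> \<sigma>) a i (lam (\<sigma> (Suc i)))"
      unfolding viol_def oc_def ec_def using od lt2 ge by auto
    then show ?thesis using i unfolding VS_def by auto
  next
    assume B: "(\<forall>i j. 1 \<le> i \<and> i < j \<and> j \<le> m \<longrightarrow> lam j < lam i) \<and> (\<forall>i \<in> {1..m}. even (lam i))"
    have lt2: "lam (\<sigma> i) < lam (\<sigma> (Suc i))" using B lt sr[of i] sr[of "Suc i"] i by auto
    have ev: "even (lam (\<sigma> i))" using B sr[of i] i by auto
    have "viol mu (lam \<circ> \<sigma>) a i (lam (\<sigma> i))"
      unfolding viol_def oc_def ec_def using ev lt2 ge md by auto
    then show ?thesis using i unfolding VS_def by auto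
  qed
qed

lemma main_eq: "gf_tab k m lam mu M = gf_det m (\<lambda>i j. gf_alt k (lam j - mu i)) M"
proof -
  define P where "P = {\<sigma>. \<sigma> permutes {1..m}}"
  define C where "C = (\<lambda>\<sigma>. {a \<in> confR k {1..m} (lam \<circ> \<sigma>) mu. wR {1..m} (lam \<circ> \<sigma>) mu a = M})"
  have finP: "finite P" unfolding P_def by (rule finite_permutations) simp
  have PC: "gf_prod_list (map (\<lambda>i. gf_alt k (lam (\<sigma> i) - mu i)) [1..<m+1]) M = int (card (C \<sigma>)) \<and> finite (C \<sigma>)" for \<sigma>
  proof -
    have "\<forall>i. 1 \<le> i \<and> i < m + 1 \<longrightarrow> even (mu i)" using h4 by auto
    from prod_lemma[OF this, of k "lam \<circ> \<sigma>" M]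
    show ?thesis unfolding C_def by (simp add: atLeastLessThanSuc_atLeastAtMost)
  qed
  let ?X = "Sigma P C"
  have finX: "finite ?X" using finP PC by auto
  have "gf_det m (\<lambda>i j. gf_alt k (lam j - mu i)) M = (\<Sum>\<sigma>\<in>P. sign \<sigma> * int (card (C \<sigma>)))"
    unfolding gf_det_def P_def using PC by simp
  also have "\<dots> = (\<Sum>\<sigma>\<in>P. \<Sum>a\<in>C \<sigma>. sign \<sigma>)" by (simp add: mult.commute)
  also have "\<dots> = (\<Sum>(\<sigma>, a)\<in>?X. sign \<sigma>)" by (rule sum.Sigma) (use finP PC in auto)
  also have "\<dots> = (\<Sum>x\<in>?X. sign (fst x))" by (simp add: case_prod_beta)
  also have "\<dots> = (\<Sum>x\<in>{x\<in>?X. phi m lam mu x = x}. sign (fst x))"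
  proof (rule inv_sum[OF finX])
    fix x assume x: "x \<in> ?X"
    obtain \<sigma> a where xe: "x = (\<sigma>, a)" by (cases x)
    have p: "\<sigma> permutes {1..m}" and c: "a \<in> confR k {1..m} (lam \<circ> \<sigma>) mu" and w: "wR {1..m} (lam \<circ> \<sigma>) mu a = M"
      using x unfolding xe P_def C_def by auto
    show "phi m lam mu x \<in> ?X"
    proof (cases "VS m mu (lam \<circ> \<sigma>) a = {}")
      case True
      then show ?thesis using x unfolding xe phi_def by simp
    next
      case False
      note B = phi_bad[OF h3 h4 h5 h6 p c False]
      show ?thesis unfolding xe B(1) P_def C_def using B(2,3,4) w by simp
    qed
    show "phi m lam mu (phi m lam mu x) = x" unfolding xe by (rule phi_inv[OF h3 h4 h5 h6 p c])
    assume ne: "phi m lam mu x \<noteq> x"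
    then have F: "VS m mu (lam \<circ> \<sigma>) a \<noteq> {}" unfolding xe phi_def by auto
    note B = phi_bad[OF h3 h4 h5 h6 p c F]
    show "sign (fst (phi m lam mu x)) = - sign (fst x)" unfolding xe B(1) using B(8) by simp
  qed
  also have "{x\<in>?X. phi m lam mu x = x} = {id} \<times> {a \<in> alt_tableaux k m lam mu. tab_weight m lam mu a = M}"
  proof (rule set_eqI)
    fix x :: "(nat \<Rightarrow> nat) \<times> (nat \<Rightarrow> int \<Rightarrow> int)"
    obtain \<sigma> a where xe: "x = (\<sigma>, a)" by (cases x)
    have twe: "tab_weight m lam mu a = wR {1..m} lam mu a"
      unfolding tab_weight_def wR_def wpart_def cells_eq by simp
    show "x \<in> {x\<in>?X. phi m lam mu x = x} \<longleftrightarrow> x \<in> {id} \<times> {a \<in> alt_tableaux k m lam mu. tab_weight m lam mu a = M}"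
    proof
      assume x: "x \<in> {x\<in>?X. phi m lam mu x = x}"
      have p: "\<sigma> permutes {1..m}" and c: "a \<in> confR k {1..m} (lam \<circ> \<sigma>) mu" and w: "wR {1..m} (lam \<circ> \<sigma>) mu a = M"
        and f: "phi m lam mu (\<sigma>, a) = (\<sigma>, a)"
        using x unfolding xe P_def C_def by auto
      have V: "VS m mu (lam \<circ> \<sigma>) a = {}"
      proof (rule ccontr)
        assume F: "VS m mu (lam \<circ> \<sigma>) a \<noteq> {}"
        note B = phi_bad[OF h3 h4 h5 h6 p c F]
        show False using B(1,9) f by auto
      qed
      then have "\<sigma> = id" using nonid_bad[OF p c] by auto
      then show "x \<in> {id} \<times> {a \<in> alt_tableaux k m lam mu. tab_weight m lam mu a = M}"
        using V c w tab_eq twe unfolding xe by auto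
    next
      assume "x \<in> {id} \<times> {a \<in> alt_tableaux k m lam mu. tab_weight m lam mu a = M}"
      then have s: "\<sigma> = id" and t: "a \<in> alt_tableaux k m lam mu" and w: "tab_weight m lam mu a = M"
        unfolding xe by auto
      have c: "a \<in> confR k {1..m} lam mu" and V: "VS m mu lam a = {}" using t tab_eq by auto
      have "id permutes {1..m}" by (rule permutes_id)
      then show "x \<in> {x\<in>?X. phi m lam mu x = x}"
        using c V w twe unfolding xe s P_def C_def phi_def by simp
    qed
  qed
  also have "(\<Sum>x\<in>{id::nat\<Rightarrow>nat} \<times> {a \<in> alt_tableaux k m lam mu. tab_weight m lam mu a = M}. sign (fst x)) =
      int (card {a \<in> alt_tableaux k m lam mu. tab_weight m lam mu a = M})"
  proof -
    let ?T = "{a \<in> alt_tableaux k m lam mu. tab_weight m lam mu a = M}"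
    have "(\<Sum>x\<in>{id::nat\<Rightarrow>nat} \<times> ?T. sign (fst x)) = (\<Sum>x\<in>{id::nat\<Rightarrow>nat} \<times> ?T. 1)" by (rule sum.cong[OF refl]) auto
    also have "\<dots> = int (card ({id::nat\<Rightarrow>nat} \<times> ?T))" by simp
    also have "\<dots> = int (card ?T)" by (simp add: card_cartesian_product_singleton)
    finally show ?thesis .
  qed
  finally show ?thesis unfolding gf_tab_def by simp
qed

end

theorem theorem46:
  fixes k :: enat and m :: nat and lam mu :: "nat \<Rightarrow> int"
  assumes "k \<ge> 1"
    and "m \<ge> 1"
    and "\<forall>i \<in> {1..m}. mu i \<le> lam i"
    and "\<forall>i \<in> {1..m}. even (mu i)"
    and "\<forall>i j. 1 \<le> i \<and> i < j \<and> j \<le> m \<longrightarrow> mu j < mu i"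
    and "((\<forall>i j. 1 \<le> i \<and> i < j \<and> j \<le> m \<longrightarrow> lam i < lam j) \<and> (\<forall>i \<in> {1..m}. odd (lam i)))
       \<or> ((\<forall>i j. 1 \<le> i \<and> i < j \<and> j \<le> m \<longrightarrow> lam j < lam i) \<and> (\<forall>i \<in> {1..m}. even (lam i)))"
  shows "gf_tab k m lam mu = gf_det m (\<lambda>i j. gf_alt k (lam j - mu i))"
  using main_eq[OF assms(3-6)] by (intro ext) 


end
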